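(* Let $\mathcal V$ be a multivector field on $X$ and let $S$ be an isolated invariant set. Then $(\operatorname{cl}S,\operatorname{mo}S)$ is a saturated index pair for $S$.
   Context: $X$ is a finite $T_0$ topological space. For $A\subset X$, $\operatorname{cl}A$ is its closure and $\operatorname{mo}A:=\operatorname{cl}A\setminus A$. $A$ is locally closed if it is the intersection of an open and a closed subset of $X$. $H$ denotes relative singular homology. A multivector is a nonempty locally closed subset of $X$; a multivector field $\mathcal V$ on $X$ is a partition of $X$ into multivectors. For $x\in X$, $[x]$ denotes the element of $\mathcal V$ containing $x$. A multivector $V$ is critical if $H(\operatorname{cl}V,\operatorname{mo}V)\neq0$, regular otherwise. Put $\Pi_{\mathcal V}(x):=[x]\cup\operatorname{cl}\{x\}$ and $\Pi_{\mathcal V}(A):=\bigcup_{x\in A}\Pi_{\mathcal V}(x)$. A $\mathbb Z$-interval is $\mathbb Z\cap I$ for a real interval $I$. A solution in $A\subset X$ is a map $\varphi:D\to A$ on a $\mathbb Z$-interval $D$ with $\varphi(i+1)\in\Pi_{\mathcal V}(\varphi(i))$ whenever $i,i+1\in D$; it is full if $D=\mathbb Z$, and a path if $D$ is bounded, its endpoints being $\varphi(\min D)$ and $\varphi(\max D)$. A full solution $\varphi$ is essential if for every $t\in\mathbb Z$ with $[\varphi(t)]$ regular, the set $\{s\in\mathbb Z:\varphi(s)\notin[\varphi(t)]\}$ is unbounded below and unbounded above. $\operatorname{Inv}A$ is the set of $x\in A$ such that there is an essential full solution $\varphi$ with image in $A$ and $\varphi(0)=x$; $A$ is invariant if $\operatorname{Inv}A=A$.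 A closed set $N$ isolates an invariant set $S\subset N$ if (a) every path in $N$ with both endpoints in $S$ has image contained in $S$, and (b) $\Pi_{\mathcal V}(S)\subset N$. An invariant set is an isolated invariant set if some closed set isolates it. An index pair for an isolated invariant set $S$ is a pair $(P_1,P_2)$ of closed subsets of $X$ with $P_2\subset P_1$ such that (IP1) if $x\in P_2$ and $y\in\Pi_{\mathcal V}(x)\cap P_1$ then $y\in P_2$; (IP2) if $x\in P_1$ and $\Pi_{\mathcal V}(x)\setminus P_1\neq\emptyset$ then $x\in P_2$; (IP3) $S=\operatorname{Inv}(P_1\setminus P_2)$. It is saturated if $S=P_1\setminus P_2$. *)

theory Defs
  imports "HOL-Analysis.Analysis" "HOL-Homology.Homology"
begin

definition locally_closed_in :: "'a topology \<Rightarrow> 'a set \<Rightarrow> bool" where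
  "locally_closed_in X A \<longleftrightarrow> (\<exists>U C. openin X U \<and> closedin X C \<and> A = U \<inter> C)"

definition mouth :: "'a topology \<Rightarrow> 'a set \<Rightarrow> 'a set" where
  "mouth X A = X closure_of A - A"

definition multivector :: "'a topology \<Rightarrow> 'a set \<Rightarrow> bool" where
  "multivector X A \<longleftrightarrow> A \<noteq> {} \<and> A \<subseteq> topspace X \<and> locally_closed_in X A"

definition multivector_field :: "'a topology \<Rightarrow> 'a set set \<Rightarrow> bool" where
  "multivector_field X V \<longleftrightarrow> (\<forall>A\<in>V. multivector X A) \<and> \<Union>V = topspace X \<and>
     (\<forall>A\<in>V. \<forall>B\<in>V. A \<noteq> B \<longrightarrow> A \<inter> B = {})"

definition cell :: "'a set set \<Rightarrow> 'a \<Rightarrow> 'a set" where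
  "cell V x = (THE A. A \<in> V \<and> x \<in> A)"

definition critical :: "'a topology \<Rightarrow> 'a set \<Rightarrow> bool" where
  "critical X A \<longleftrightarrow>
     (\<exists>p. \<not> trivial_group (relative_homology_group p (subtopology X (X closure_of A)) (mouth X A)))"

definition regular :: "'a topology \<Rightarrow> 'a set \<Rightarrow> bool" where
  "regular X A \<longleftrightarrow> \<not> critical X A"

definition Pi_pt :: "'a topology \<Rightarrow> 'a set set \<Rightarrow> 'a \<Rightarrow> 'a set" where
  "Pi_pt X V x = cell V x \<union> X closure_of {x}"

definition Pi_set :: "'a topology \<Rightarrow> 'a set set \<Rightarrow> 'a set \<Rightarrow> 'a set" where
  "Pi_set X V A = (\<Union>x\<in>A. Pi_pt X V x)"

definition Z_interval :: "int set \<Rightarrow> bool" where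
  "Z_interval D \<longleftrightarrow> (\<forall>i\<in>D. \<forall>k\<in>D. \<forall>j. i \<le> j \<and> j \<le> k \<longrightarrow> j \<in> D)"

definition solution :: "'a topology \<Rightarrow> 'a set set \<Rightarrow> 'a set \<Rightarrow> int set \<Rightarrow> (int \<Rightarrow> 'a) \<Rightarrow> bool" where
  "solution X V A D phi \<longleftrightarrow> Z_interval D \<and> phi ` D \<subseteq> A \<and>
     (\<forall>i. i \<in> D \<and> i + 1 \<in> D \<longrightarrow> phi (i + 1) \<in> Pi_pt X V (phi i))"

definition full_solution :: "'a topology \<Rightarrow> 'a set set \<Rightarrow> 'a set \<Rightarrow> (int \<Rightarrow> 'a) \<Rightarrow> bool" where
  "full_solution X V A phi \<longleftrightarrow> solution X V A UNIV phi"

text \<open>A path: a solution on a bounded (nonempty, so that endpoints exist) Z-interval.\<close>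
definition path_in :: "'a topology \<Rightarrow> 'a set set \<Rightarrow> 'a set \<Rightarrow> int set \<Rightarrow> (int \<Rightarrow> 'a) \<Rightarrow> bool" where
  "path_in X V A D phi \<longleftrightarrow> solution X V A D phi \<and> D \<noteq> {} \<and> bdd_above D \<and> bdd_below D"

definition essential :: "'a topology \<Rightarrow> 'a set set \<Rightarrow> (int \<Rightarrow> 'a) \<Rightarrow> bool" where
  "essential X V phi \<longleftrightarrow> (\<forall>t. regular X (cell V (phi t)) \<longrightarrow>
      (\<not> bdd_below {s. phi s \<notin> cell V (phi t)} \<and> \<not> bdd_above {s. phi s \<notin> cell V (phi t)}))"

definition Inv :: "'a topology \<Rightarrow> 'a set set \<Rightarrow> 'a set \<Rightarrow> 'a set" where
  "Inv X V A = {x \<in> A. \<exists>phi. full_solution X V A phi \<and> essential X V phi \<and> phi 0 = x}"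

definition invariant :: "'a topology \<Rightarrow> 'a set set \<Rightarrow> 'a set \<Rightarrow> bool" where
  "invariant X V A \<longleftrightarrow> Inv X V A = A"

definition isolates :: "'a topology \<Rightarrow> 'a set set \<Rightarrow> 'a set \<Rightarrow> 'a set \<Rightarrow> bool" where
  "isolates X V N S \<longleftrightarrow> closedin X N \<and> S \<subseteq> N \<and>
     (\<forall>D phi. path_in X V N D phi \<and> phi (Min D) \<in> S \<and> phi (Max D) \<in> S \<longrightarrow> phi ` D \<subseteq> S) \<and>
     Pi_set X V S \<subseteq> N"

definition isolated_invariant :: "'a topology \<Rightarrow> 'a set set \<Rightarrow> 'a set \<Rightarrow> bool" where
  "isolated_invariant X V S \<longleftrightarrow> invariant X V S \<and> (\<exists>N. isolates X V N S)"

definition index_pair :: "'a topology \<Rightarrow> 'a set set \<Rightarrow> 'a set \<Rightarrow> 'a set \<Rightarrow> 'a set \<Rightarrow> bool" where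
  "index_pair X V S P1 P2 \<longleftrightarrow> closedin X P1 \<and> closedin X P2 \<and> P2 \<subseteq> P1 \<and>
     (\<forall>x y. x \<in> P2 \<and> y \<in> Pi_pt X V x \<inter> P1 \<longrightarrow> y \<in> P2) \<and>
     (\<forall>x. x \<in> P1 \<and> Pi_pt X V x - P1 \<noteq> {} \<longrightarrow> x \<in> P2) \<and>
     S = Inv X V (P1 - P2)"

definition saturated_index_pair :: "'a topology \<Rightarrow> 'a set set \<Rightarrow> 'a set \<Rightarrow> 'a set \<Rightarrow> 'a set \<Rightarrow> bool" where
  "saturated_index_pair X V S P1 P2 \<longleftrightarrow> index_pair X V S P1 P2 \<and> S = P1 - P2"

end

theory Submission
  imports Defs
begin

lemma mvf_parts:
  assumes "multivector_field X V"
  shows "\<Union>V = topspace X" "\<forall>A\<in>V. \<forall>B\<in>V. A \<noteq> B \<longrightarrow> A \<inter> B = {}"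
  using assms unfolding multivector_field_def by simp_all

lemma cell_props:
  assumes "multivector_field X V" "x \<in> topspace X"
  shows "cell V x \<in> V \<and> x \<in> cell V x"
proof -
  note cov = mvf_parts(1)[OF assms(1)] and disj = mvf_parts(2)[OF assms(1)]
  have "x \<in> \<Union>V" using cov assms(2) by simp
  then obtain A where A: "A \<in> V" "x \<in> A" by (rule UnionE)
  have u: "\<And>B. B \<in> V \<and> x \<in> B \<Longrightarrow> B = A"
  proof -
    fix B assume B: "B \<in> V \<and> x \<in> B"
    show "B = A"
    proof (rule ccontr)
      assume "B \<noteq> A"
      hence "B \<inter> A = {}" using disj B A(1) by blast
      thus False using B A(2) by blast
    qed
  qed
  have "cell V x = A" unfolding cell_def
  proof (rule the_equality)
    show "A \<in> V \<and> x \<in> A" using A by blast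
    fix B assume "B \<in> V \<and> x \<in> B"
    thus "B = A" by (rule u)
  qed
  thus ?thesis using A by simp
qed

lemma cell_eq:
  assumes "multivector_field X V" "x \<in> topspace X" "y \<in> cell V x"
  shows "cell V y = cell V x"
proof -
  note cov = mvf_parts(1)[OF assms(1)] and disj = mvf_parts(2)[OF assms(1)]
  have cx: "cell V x \<in> V" "x \<in> cell V x" using cell_props[OF assms(1,2)] by auto
  have "y \<in> \<Union>V" using cx(1) assms(3) by blast
  hence "y \<in> topspace X" using cov by simp
  hence cy: "cell V y \<in> V" "y \<in> cell V y" using cell_props[OF assms(1)] by auto
  show ?thesis
  proof (rule ccontr)
    assume "cell V y \<noteq> cell V x"
    hence "cell V y \<inter> cell V x = {}" using disj cx(1) cy(1) by blast
    thus False using cy(2) assms(3) by blast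
  qed
qed

lemma three_path:
  assumes iso: "isolates X V N S"
    and ab: "b \<in> Pi_pt X V a" and bc: "c \<in> Pi_pt X V b" and aS: "a \<in> S" and cS: "c \<in> S" and bN: "b \<in> N"
  shows "b \<in> S"
proof -
  define phi :: "int \<Rightarrow> _" where "phi i = (if i = 0 then a else if i = 1 then b else c)" for i
  define D :: "int set" where "D = {0,1,2}"
  have SN: "S \<subseteq> N" using iso unfolding isolates_def by blast
  have p0: "phi 0 = a" and p1: "phi 1 = b" and p2: "phi 2 = c" by (simp_all add: phi_def)
  have Zi: "Z_interval D" unfolding Z_interval_def D_def by auto
  have img: "phi ` D \<subseteq> N" unfolding D_def using p0 p1 p2 SN aS cS bN by auto
  have st: "\<forall>i. i \<in> D \<and> i + 1 \<in> D \<longrightarrow> phi (i + 1) \<in> Pi_pt X V (phi i)"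
  proof (intro allI impI)
    fix i assume "i \<in> D \<and> i + 1 \<in> D"
    hence "i = 0 \<or> i = 1" unfolding D_def by auto
    thus "phi (i + 1) \<in> Pi_pt X V (phi i)" using p0 p1 p2 ab bc by auto
  qed
  have sol: "solution X V N D phi" unfolding solution_def using Zi img st by blast
  have "path_in X V N D phi" unfolding path_in_def using sol unfolding D_def by auto
  moreover have "Min D = 0" "Max D = 2" unfolding D_def by auto
  ultimately have h: "path_in X V N D phi \<and> phi (Min D) \<in> S \<and> phi (Max D) \<in> S"
    using p0 p2 aS cS by simp
  have "phi ` D \<subseteq> S" using iso h unfolding isolates_def by blast
  hence "phi 1 \<in> S" unfolding D_def by blast
  thus ?thesis using p1 by simp
qed

lemma closure_pt:
  assumes "finite S" "x \<in> X closure_of S"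
  shows "\<exists>s\<in>S. x \<in> X closure_of {s}"
proof -
  have e: "\<Union>((\<lambda>s. {s}) ` S) = S" by blast
  have fin: "finite ((\<lambda>s. {s}) ` S)" using assms(1) by (rule finite_imageI)
  have "x \<in> X closure_of (\<Union>((\<lambda>s. {s}) ` S))" unfolding e by (rule assms(2))
  also have "X closure_of (\<Union>((\<lambda>s. {s}) ` S)) = (\<Union>T\<in>(\<lambda>s. {s}) ` S. X closure_of T)"
    by (rule closure_of_Union[OF fin])
  finally obtain T where "T \<in> (\<lambda>s. {s}) ` S" "x \<in> X closure_of T" by (rule UN_E)
  thus ?thesis by blast
qed

theorem proposition5p3:
  fixes X :: "'a topology" and V :: "'a set set" and S :: "'a set"
  assumes "finite (topspace X)" and "t0_space X"
    and "multivector_field X V"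
    and "isolated_invariant X V S"
  shows "saturated_index_pair X V S (X closure_of S) (mouth X S)"
proof -
  obtain N where iso: "isolates X V N S" and inv: "Inv X V S = S"
    using assms(4) unfolding isolated_invariant_def invariant_def by auto
  have Ncl: "closedin X N" and SN: "S \<subseteq> N" and PiN: "Pi_set X V S \<subseteq> N"
    using iso unfolding isolates_def by simp_all
  have NT: "N \<subseteq> topspace X" using closedin_subset[OF Ncl] .
  have ST: "S \<subseteq> topspace X" using SN NT by auto
  have finS: "finite S" by (rule finite_subset[OF ST assms(1)])
  have Scl: "S \<subseteq> X closure_of S" using closure_of_subset[OF ST] .
  have PiS: "\<And>s y. s \<in> S \<Longrightarrow> y \<in> Pi_pt X V s \<Longrightarrow> y \<in> N"
    using PiN unfolding Pi_set_def by auto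
  have key: "\<And>x y. x \<in> mouth X S \<Longrightarrow> y \<in> S \<Longrightarrow> y \<in> Pi_pt X V x \<Longrightarrow> False"
  proof -
    fix x y assume x: "x \<in> mouth X S" and y: "y \<in> S" "y \<in> Pi_pt X V x"
    have "x \<in> X closure_of S" using x unfolding mouth_def by blast
    then obtain s where s: "s \<in> S" "x \<in> X closure_of {s}"
      using closure_pt[OF finS] by blast
    have xPi: "x \<in> Pi_pt X V s" using s unfolding Pi_pt_def by auto
    have "x \<in> S" using three_path[OF iso xPi y(2) s(1) y(1) PiS[OF s(1) xPi]] .
    thus False using x unfolding mouth_def by auto
  qed
  have moT: "mouth X S \<subseteq> topspace X"
    unfolding mouth_def using closure_of_subset_topspace[of X S] by blast
  have mocl: "mouth X S \<subseteq> X closure_of S" unfolding mouth_def by blast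
  have mo_closed: "closedin X (mouth X S)"
  proof -
    have "X closure_of (mouth X S) \<subseteq> mouth X S"
    proof
      fix z assume z: "z \<in> X closure_of (mouth X S)"
      have finmo: "finite (mouth X S)"
        by (rule finite_subset[OF moT assms(1)])
      obtain x where x: "x \<in> mouth X S" "z \<in> X closure_of {x}"
        using closure_pt[OF finmo z] by blast
      have "z \<in> X closure_of S"
        using z closure_of_mono[OF mocl, of X] by (simp add: subset_iff)
      moreover have "z \<notin> S"
      proof
        assume "z \<in> S"
        moreover have "z \<in> Pi_pt X V x" using x unfolding Pi_pt_def by auto
        ultimately show False using key x(1) by blast
      qed
      ultimately show "z \<in> mouth X S" unfolding mouth_def by auto
    qed
    with moT show ?thesis using closure_of_subset_eq[of "mouth X S" X] by blast
  qed
  have eq: "X closure_of S - mouth X S = S" using Scl unfolding mouth_def by auto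
  have IP1: "\<forall>x y. x \<in> mouth X S \<and> y \<in> Pi_pt X V x \<inter> X closure_of S \<longrightarrow> y \<in> mouth X S"
  proof (intro allI impI)
    fix x y assume a: "x \<in> mouth X S \<and> y \<in> Pi_pt X V x \<inter> X closure_of S"
    have "y \<notin> S" using key a by blast
    thus "y \<in> mouth X S" using a unfolding mouth_def by blast
  qed
  have IP2: "\<forall>x. x \<in> X closure_of S \<and> Pi_pt X V x - X closure_of S \<noteq> {} \<longrightarrow> x \<in> mouth X S"
  proof (intro allI impI)
    fix x assume a: "x \<in> X closure_of S \<and> Pi_pt X V x - X closure_of S \<noteq> {}"
    show "x \<in> mouth X S"
    proof (rule ccontr)
      assume "x \<notin> mouth X S"
      hence xS: "x \<in> S" using a unfolding mouth_def by auto
      obtain y where y: "y \<in> Pi_pt X V x" "y \<notin> X closure_of S" using a by auto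
      have "X closure_of {x} \<subseteq> X closure_of S" using xS by (intro closure_of_mono) blast
      hence yc: "y \<in> cell V x" using y unfolding Pi_pt_def by auto
      have xT: "x \<in> topspace X" using xS ST by auto
      have "cell V y = cell V x" using cell_eq[OF assms(3) xT yc] .
      hence "x \<in> Pi_pt X V y" using cell_props[OF assms(3) xT] unfolding Pi_pt_def by auto
      hence "y \<in> S" using three_path[OF iso y(1) _ xS xS PiS[OF xS y(1)]] by blast
      thus False using y Scl by auto
    qed
  qed
  show ?thesis
    unfolding saturated_index_pair_def index_pair_def
    using mo_closed IP1 IP2 eq inv mocl by simp
qed

end
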